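(* If $U$ is a unicyclic graph, then every nontrivial 2-switch between two edges of $\operatorname{Cycles}(U)$ is a p-switch over $U$.
   Context: Graphs are finite, simple, undirected, labeled. A unicyclic graph is a connected graph with exactly one cycle; a pseudoforest is a graph each of whose components is a tree or a unicyclic graph. For vertices $a,b,c,d$, $A=\binom{a\ b}{c\ d}$ is interchangeable in $G$ if $ab,cd\in E(G)$, $\{a,b\}\cap\{c,d\}=\varnothing$, $ac,bd\notin E(G)$; the 2-switch $\tau_A$ sends $G$ to $G-ab-cd+ac+bd$ if $A$ is interchangeable and to $G$ otherwise (trivial); a 2-switch between edges $ab,cd$ is $\tau_A$ with $A=\binom{a\ b}{c\ d}$. A nontrivial 2-switch $\tau$ over a pseudoforest $G$ is a p-switch if $\tau(G)$ is a pseudoforest. $\operatorname{Cycles}(H)$ is the subgraph induced by vertices lying on some cycle of $H$. *)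

theory Defs
  imports Main
begin

type_synonym 'a graph = "'a set \<times> 'a set set"

definition graph :: "'a graph \<Rightarrow> bool" where
  "graph G \<longleftrightarrow> finite (fst G) \<and>
     (\<forall>e\<in>snd G. \<exists>x y. x \<noteq> y \<and> e = {x, y} \<and> x \<in> fst G \<and> y \<in> fst G)"

definition adj :: "'a graph \<Rightarrow> 'a \<Rightarrow> 'a \<Rightarrow> bool" where
  "adj G x y \<longleftrightarrow> {x, y} \<in> snd G"

definition connected_graph :: "'a graph \<Rightarrow> bool" where
  "connected_graph G \<longleftrightarrow> graph G \<and> fst G \<noteq> {} \<and>
     (\<forall>u\<in>fst G. \<forall>v\<in>fst G. (adj G)\<^sup>*\<^sup>* u v)"

definition is_cycle_list :: "'a graph \<Rightarrow> 'a list \<Rightarrow> bool" where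
  "is_cycle_list G vs \<longleftrightarrow> 3 \<le> length vs \<and> distinct vs \<and> set vs \<subseteq> fst G \<and>
     (\<forall>i<length vs. adj G (vs ! i) (vs ! ((i + 1) mod length vs)))"

definition cycle_edges :: "'a list \<Rightarrow> 'a set set" where
  "cycle_edges vs = {{vs ! i, vs ! ((i + 1) mod length vs)} | i. i < length vs}"

text \<open>The cycles of G, each identified with its edge set (a cycle subgraph).\<close>
definition cycles :: "'a graph \<Rightarrow> 'a set set set" where
  "cycles G = {cycle_edges vs | vs. is_cycle_list G vs}"

definition unicyclic :: "'a graph \<Rightarrow> bool" where
  "unicyclic G \<longleftrightarrow> connected_graph G \<and> (\<exists>!C. C \<in> cycles G)"

definition is_tree :: "'a graph \<Rightarrow> bool" where
  "is_tree G \<longleftrightarrow> connected_graph G \<and> cycles G = {}"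

definition induced :: "'a graph \<Rightarrow> 'a set \<Rightarrow> 'a graph" where
  "induced G S = (S, {e \<in> snd G. e \<subseteq> S})"

definition component :: "'a graph \<Rightarrow> 'a \<Rightarrow> 'a graph" where
  "component G v = induced G {u \<in> fst G. (adj G)\<^sup>*\<^sup>* v u}"

definition pseudoforest :: "'a graph \<Rightarrow> bool" where
  "pseudoforest G \<longleftrightarrow> graph G \<and>
     (\<forall>v\<in>fst G. is_tree (component G v) \<or> unicyclic (component G v))"

definition Cycles :: "'a graph \<Rightarrow> 'a graph" where
  "Cycles H = induced H {v \<in> fst H. \<exists>vs. is_cycle_list H vs \<and> v \<in> set vs}"

definition interchangeable :: "'a graph \<Rightarrow> 'a \<Rightarrow> 'a \<Rightarrow> 'a \<Rightarrow> 'a \<Rightarrow> bool" where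
  "interchangeable G a b c d \<longleftrightarrow> {a, b} \<in> snd G \<and> {c, d} \<in> snd G \<and>
     {a, b} \<inter> {c, d} = {} \<and> {a, c} \<notin> snd G \<and> {b, d} \<notin> snd G"

definition two_switch :: "'a graph \<Rightarrow> 'a \<Rightarrow> 'a \<Rightarrow> 'a \<Rightarrow> 'a \<Rightarrow> 'a graph" where
  "two_switch G a b c d =
     (if interchangeable G a b c d
      then (fst G, (snd G - {{a, b}, {c, d}}) \<union> {{a, c}, {b, d}})
      else G)"

definition p_switch :: "'a graph \<Rightarrow> 'a \<Rightarrow> 'a \<Rightarrow> 'a \<Rightarrow> 'a \<Rightarrow> bool" where
  "p_switch G a b c d \<longleftrightarrow> pseudoforest G \<and> two_switch G a b c d \<noteq> G \<and>
     pseudoforest (two_switch G a b c d)"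

end

theory Submission
  imports Defs
begin

lemma graph_edge: "graph G \<Longrightarrow> {p,q} \<in> snd G \<Longrightarrow> p \<noteq> q \<and> p \<in> fst G \<and> q \<in> fst G"
  unfolding graph_def by (metis doubleton_eq_iff)

lemma graph_sub: "graph (V,E) \<Longrightarrow> E2 \<subseteq> E \<Longrightarrow> graph (V,E2)"
  by (auto simp: graph_def)

lemma edge_in: "i < length vs \<Longrightarrow> {vs!i, vs!((i+1) mod length vs)} \<in> cycle_edges vs"
  by (auto simp: cycle_edges_def)

lemma cycle_edges_sub: "is_cycle_list G vs \<Longrightarrow> cycle_edges vs \<subseteq> snd G"
  by (auto simp: is_cycle_list_def cycle_edges_def adj_def)

lemma cycle_mono: "is_cycle_list G vs \<Longrightarrow> fst G \<subseteq> fst H \<Longrightarrow> snd G \<subseteq> snd H \<Longrightarrow> is_cycle_list H vs"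
  by (auto simp: is_cycle_list_def adj_def)

lemma cycle_restrict: "is_cycle_list (V,E) vs \<Longrightarrow> cycle_edges vs \<subseteq> E2 \<Longrightarrow> is_cycle_list (V,E2) vs"
  unfolding is_cycle_list_def adj_def using edge_in by fastforce

lemma cycle_vert: "{p,q} \<in> cycle_edges vs \<Longrightarrow> p \<in> set vs \<and> q \<in> set vs"
proof -
  assume "{p,q} \<in> cycle_edges vs"
  then obtain i where i: "i < length vs" "{p,q} = {vs!i, vs!((i+1) mod length vs)}"
    by (auto simp: cycle_edges_def)
  have "(i+1) mod length vs < length vs" using i by (metis gr_implies_not0 mod_less_divisor neq0_conv)
  then have "vs!i \<in> set vs" "vs!((i+1) mod length vs) \<in> set vs" using i nth_mem by auto
  then show ?thesis using i(2) by (metis insertCI insert_iff singletonD)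
qed

lemma sym_rtc: assumes "\<And>x y. R x y \<Longrightarrow> R y x" shows "R\<^sup>*\<^sup>* x y \<Longrightarrow> R\<^sup>*\<^sup>* y x"
proof (induction rule: rtranclp_induct)
  case base then show ?case by simp
next
  case (step y z) show ?case by (rule converse_rtranclp_into_rtranclp[OF assms[OF step(2)] step(3)])
qed

lemma lift_rtc: "R\<^sup>*\<^sup>* x y \<Longrightarrow> (\<And>u w. R u w \<Longrightarrow> S\<^sup>*\<^sup>* u w) \<Longrightarrow> S\<^sup>*\<^sup>* x y"
proof -
  assume r: "R\<^sup>*\<^sup>* x y" and h: "\<And>u w. R u w \<Longrightarrow> S\<^sup>*\<^sup>* u w"
  from r show ?thesis
  proof (induction rule: rtranclp_induct)
    case base then show ?case by simp
  next
    case (step y z) show ?case by (rule rtranclp_trans[OF step(3) h[OF step(2)]])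
  qed
qed

lemma W0: "is_cycle_list G vs \<Longrightarrow> k < length vs \<Longrightarrow> (\<lambda>u w. {u,w} \<in> cycle_edges vs)\<^sup>*\<^sup>* (vs!0) (vs!k)"
proof (induction k)
  case 0 then show ?case by simp
next
  case (Suc k)
  have "{vs!k, vs!((k+1) mod length vs)} \<in> cycle_edges vs" using Suc by (intro edge_in) simp
  moreover have "(k+1) mod length vs = Suc k" using Suc by simp
  moreover have "(\<lambda>u w. {u,w} \<in> cycle_edges vs)\<^sup>*\<^sup>* (vs!0) (vs!k)" using Suc by simp
  ultimately show ?case by (simp add: rtranclp.rtrancl_into_rtrancl)
qed

lemma mod_aux: "i < (n::nat) \<Longrightarrow> 3 \<le> n \<Longrightarrow> ((i+1) mod n + 1) mod n \<noteq> i"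
  by (cases "i+1 < n"; cases "i+2 < n") (auto simp: mod_if)

lemma mod_aux2: "i < (n::nat) \<Longrightarrow> k + 1 < n \<Longrightarrow> (i+1+k) mod n \<noteq> i"
  by (cases "i+1+k < n") (auto simp: mod_if)

lemma W: assumes "is_cycle_list G vs" "i < length vs"
  shows "k < length vs \<Longrightarrow> (\<lambda>u w. {u,w} \<in> cycle_edges vs - {{vs!i, vs!((i+1) mod length vs)}})\<^sup>*\<^sup>*
     (vs!((i+1) mod length vs)) (vs!((i+1+k) mod length vs))"
proof (induction k)
  case 0 then show ?case by simp
next
  case (Suc k)
  let ?n = "length vs"
  define j where "j = (i+1+k) mod ?n"
  have jn: "j < ?n" using Suc j_def by (metis gr_implies_not0 mod_less_divisor neq0_conv)
  have e: "{vs!j, vs!((j+1) mod ?n)} \<in> cycle_edges vs" using jn by (rule edge_in)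
  have jj: "(j+1) mod ?n = (i+1+Suc k) mod ?n" unfolding j_def by (simp add: mod_Suc_eq)
  have ji: "j \<noteq> i" unfolding j_def using mod_aux2[OF assms(2), of k] Suc by simp
  have d: "distinct vs" "3 \<le> ?n" using assms(1) by (auto simp: is_cycle_list_def)
  have i1: "(i+1) mod ?n < ?n" "(j+1) mod ?n < ?n" using jn by (metis gr_implies_not0 mod_less_divisor neq0_conv)+
  have ne: "{vs!j, vs!((j+1) mod ?n)} \<noteq> {vs!i, vs!((i+1) mod ?n)}"
  proof
    assume "{vs!j, vs!((j+1) mod ?n)} = {vs!i, vs!((i+1) mod ?n)}"
    then have "(vs!j = vs!i \<and> vs!((j+1) mod ?n) = vs!((i+1) mod ?n)) \<or>
               (vs!j = vs!((i+1) mod ?n) \<and> vs!((j+1) mod ?n) = vs!i)"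
      by (simp add: doubleton_eq_iff)
    then show False
    proof
      assume "vs!j = vs!i \<and> vs!((j+1) mod ?n) = vs!((i+1) mod ?n)"
      then show False using nth_eq_iff_index_eq[OF d(1) jn assms(2)] ji by simp
    next
      assume h: "vs!j = vs!((i+1) mod ?n) \<and> vs!((j+1) mod ?n) = vs!i"
      then have "j = (i+1) mod ?n" using nth_eq_iff_index_eq[OF d(1) jn i1(1)] by simp
      moreover have "(j+1) mod ?n = i" using h nth_eq_iff_index_eq[OF d(1) i1(2) assms(2)] by simp
      ultimately show False using mod_aux[OF assms(2) d(2)] by simp
    qed
  qed
  have "(\<lambda>u w. {u,w} \<in> cycle_edges vs - {{vs!i, vs!((i+1) mod length vs)}}) (vs!j) (vs!((j+1) mod ?n))"
    using e ne by simp
  then show ?case using Suc j_def jj by (metis (no_types, lifting) Suc_lessD rtranclp.rtrancl_into_rtrancl)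
qed

lemma W': assumes "is_cycle_list G vs" "{p,q} \<in> cycle_edges vs"
  shows "(\<lambda>u w. {u,w} \<in> cycle_edges vs - {{p,q}})\<^sup>*\<^sup>* p q"
proof -
  let ?n = "length vs"
  obtain i where i: "i < ?n" "{p,q} = {vs!i, vs!((i+1) mod ?n)}"
    using assms(2) by (auto simp: cycle_edges_def)
  have n: "?n - 1 < ?n" using i by simp
  have "i+1+(?n-1) = i + ?n" using i by simp
  then have "(i+1+(?n-1)) mod ?n = i" using i by simp
  then have r: "(\<lambda>u w. {u,w} \<in> cycle_edges vs - {{p,q}})\<^sup>*\<^sup>* (vs!((i+1) mod ?n)) (vs!i)"
    using W[OF assms(1) i(1) n] i(2) by simp
  have rs: "(\<lambda>u w. {u,w} \<in> cycle_edges vs - {{p,q}})\<^sup>*\<^sup>* (vs!i) (vs!((i+1) mod ?n))"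
    by (rule sym_rtc[OF _ r]) (simp add: insert_commute)
  from i(2) have "(p = vs!i \<and> q = vs!((i+1) mod ?n)) \<or> (p = vs!((i+1) mod ?n) \<and> q = vs!i)"
    by (simp add: doubleton_eq_iff)
  then show ?thesis using r rs by auto
qed


lemma path_exists: "R\<^sup>*\<^sup>* x y \<Longrightarrow> \<exists>ps. ps \<noteq> [] \<and> hd ps = x \<and> last ps = y \<and> distinct ps \<and>
   (\<forall>i. Suc i < length ps \<longrightarrow> R (ps!i) (ps!Suc i))"
proof (induction rule: rtranclp_induct)
  case base then show ?case by (intro exI[of _ "[x]"]) simp
next
  case (step z y)
  then obtain ps where ps: "ps \<noteq> []" "hd ps = x" "last ps = z" "distinct ps"
    "\<forall>i. Suc i < length ps \<longrightarrow> R (ps!i) (ps!Suc i)" by blast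
  show ?case
  proof (cases "y \<in> set ps")
    case True
    then obtain m where m: "m < length ps" "ps!m = y" by (auto simp: in_set_conv_nth)
    let ?qs = "take (Suc m) ps"
    have "?qs \<noteq> []" using ps by simp
    moreover have "hd ?qs = x" using ps by simp
    moreover have "last ?qs = y"
    proof -
      have l: "length ?qs = Suc m" using m by simp
      then have "?qs \<noteq> []" by auto
      then have "last ?qs = ?qs ! m" using l by (simp add: last_conv_nth)
      then show ?thesis using m by simp
    qed
    moreover have "distinct ?qs" using ps by simp
    moreover have "\<forall>i. Suc i < length ?qs \<longrightarrow> R (?qs!i) (?qs!Suc i)" using ps(5) by auto
    ultimately show ?thesis by blast
  next
    case False
    let ?qs = "ps @ [y]"
    have "\<forall>i. Suc i < length ?qs \<longrightarrow> R (?qs!i) (?qs!Suc i)"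
    proof (intro allI impI)
      fix i assume i: "Suc i < length ?qs"
      show "R (?qs!i) (?qs!Suc i)"
      proof (cases "Suc i < length ps")
        case True then show ?thesis using ps(5) by (simp add: nth_append)
      next
        case False
        then have "Suc i = length ps" using i by simp
        moreover have "ps ! i = z" using ps(1,3) \<open>Suc i = length ps\<close> by (metis diff_Suc_1 last_conv_nth)
        ultimately show ?thesis using step(2) by (simp add: nth_append)
      qed
    qed
    then show ?thesis using ps False by (intro exI[of _ ?qs]) simp
  qed
qed

lemma lemmaB:
  assumes g: "graph (V,E)" and e: "{x,y} \<in> E"
    and r: "(adj (V, E - {{x,y}}))\<^sup>*\<^sup>* x y"
  shows "\<exists>vs. is_cycle_list (V,E) vs \<and> {x,y} \<in> cycle_edges vs"
proof -
  have xy: "x \<noteq> y" "x \<in> V" "y \<in> V" using graph_edge[OF g, of x y] e by auto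
  obtain ps where ps: "ps \<noteq> []" "hd ps = x" "last ps = y" "distinct ps"
    "\<forall>i. Suc i < length ps \<longrightarrow> adj (V, E - {{x,y}}) (ps!i) (ps!Suc i)"
    using path_exists[OF r] by blast
  let ?n = "length ps"
  have p0: "ps!0 = x" using ps by (simp add: hd_conv_nth)
  have pl: "ps!(?n - 1) = y" using ps by (simp add: last_conv_nth)
  have st: "\<And>i. Suc i < ?n \<Longrightarrow> {ps!i, ps!Suc i} \<in> E - {{x,y}}" using ps(5) by (simp add: adj_def)
  have n2: "?n \<ge> 2"
  proof (rule ccontr)
    assume "\<not> ?n \<ge> 2"
    moreover have "?n \<noteq> 0" using ps(1) by simp
    ultimately have "?n = 1" by linarith
    then show False using p0 pl xy by simp
  qed
  have n3: "?n \<ge> 3"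
  proof (rule ccontr)
    assume "\<not> ?n \<ge> 3"
    then have "?n = 2" using n2 by simp
    then show False using st[of 0] p0 pl by simp
  qed
  have sv: "set ps \<subseteq> V"
  proof
    fix p assume "p \<in> set ps"
    then obtain i where i: "i < ?n" "ps!i = p" by (auto simp: in_set_conv_nth)
    show "p \<in> V"
    proof (cases i)
      case 0 then show ?thesis using i p0 xy by simp
    next
      case (Suc j)
      then have "{ps!j, ps!i} \<in> E" using st[of j] i by simp
      then show ?thesis using graph_edge[OF g] i by fastforce
    qed
  qed
  have adjs: "\<forall>i<?n. adj (V,E) (ps!i) (ps!((i+1) mod ?n))"
  proof (intro allI impI)
    fix i assume i: "i < ?n"
    show "adj (V,E) (ps!i) (ps!((i+1) mod ?n))"
    proof (cases "Suc i < ?n")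
      case True then show ?thesis using st[of i] by (simp add: adj_def)
    next
      case False
      then have "Suc i = ?n" using i by simp
      then have "i = ?n - 1" "(i+1) mod ?n = 0" by auto
      then show ?thesis using p0 pl e by (simp add: adj_def insert_commute)
    qed
  qed
  have "is_cycle_list (V,E) ps" using n3 ps(4) sv adjs by (simp add: is_cycle_list_def)
  moreover have "{x,y} \<in> cycle_edges ps"
  proof -
    have "?n - 1 < ?n" using n3 by simp
    moreover have "?n - 1 + 1 = ?n" using n3 by simp
    then have "(?n - 1 + 1) mod ?n = 0" by simp
    ultimately have "{ps!(?n-1), ps!0} \<in> cycle_edges ps" using edge_in by metis
    then show ?thesis using p0 pl by (simp add: insert_commute)
  qed
  ultimately show ?thesis by blast
qed

lemma U1_aux:
  assumes g: "graph (V,E)" and ac: "\<not>(\<exists>vs. is_cycle_list (V, E - {e}) vs)"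
    and c1: "is_cycle_list (V,E) vs1" and c2: "is_cycle_list (V,E) vs2"
    and f: "f \<in> cycle_edges vs1" "f \<notin> cycle_edges vs2"
  shows False
proof -
  have e1: "e \<in> cycle_edges vs1"
  proof (rule ccontr)
    assume "e \<notin> cycle_edges vs1"
    then have "cycle_edges vs1 \<subseteq> E - {e}" using cycle_edges_sub[OF c1] by auto
    then show False using cycle_restrict[OF c1] ac by blast
  qed
  have e2: "e \<in> cycle_edges vs2"
  proof (rule ccontr)
    assume "e \<notin> cycle_edges vs2"
    then have "cycle_edges vs2 \<subseteq> E - {e}" using cycle_edges_sub[OF c2] by auto
    then show False using cycle_restrict[OF c2] ac by blast
  qed
  have fe: "f \<noteq> e" using f e2 by auto
  obtain p q where pq: "f = {p,q}" using f(1) by (auto simp: cycle_edges_def)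
  obtain x y where xy: "e = {x,y}" using e1 by (auto simp: cycle_edges_def)
  let ?T = "\<lambda>u w. {u,w} \<in> (E - {e}) - {{q,p}}"
  have Tsym: "\<And>u w. ?T u w \<Longrightarrow> ?T w u" by (simp add: insert_commute)
  have r2: "(\<lambda>u w. {u,w} \<in> cycle_edges vs2 - {{x,y}})\<^sup>*\<^sup>* x y" using W'[OF c2] e2 xy by simp
  have t2: "?T\<^sup>*\<^sup>* x y"
  proof (rule lift_rtc[OF r2])
    fix u w assume "{u,w} \<in> cycle_edges vs2 - {{x,y}}"
    then have "?T u w" using cycle_edges_sub[OF c2] f(2) pq xy by (auto simp: insert_commute)
    then show "?T\<^sup>*\<^sup>* u w" by (intro r_into_rtranclp)
  qed
  have t2': "?T\<^sup>*\<^sup>* y x" using sym_rtc[OF Tsym t2] .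
  have r1: "(\<lambda>u w. {u,w} \<in> cycle_edges vs1 - {{q,p}})\<^sup>*\<^sup>* q p" using W'[OF c1, of q p] f(1) pq
    by (simp add: insert_commute)
  have t1: "?T\<^sup>*\<^sup>* q p"
  proof (rule lift_rtc[OF r1])
    fix u w assume uw: "{u,w} \<in> cycle_edges vs1 - {{q,p}}"
    show "?T\<^sup>*\<^sup>* u w"
    proof (cases "{u,w} = e")
      case True
      then have "(u = x \<and> w = y) \<or> (u = y \<and> w = x)" using xy by (simp add: doubleton_eq_iff)
      then show ?thesis using t2 t2' by auto
    next
      case False
      then have "?T u w" using uw cycle_edges_sub[OF c1] by auto
      then show ?thesis by (intro r_into_rtranclp)
    qed
  qed
  have g2: "graph (V, E - {e})" using graph_sub[OF g] by blast
  have fE: "{q,p} \<in> E - {e}" using f(1) cycle_edges_sub[OF c1] fe pq by (auto simp: insert_commute)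
  have "adj (V, (E - {e}) - {{q,p}}) = ?T" by (intro ext) (simp add: adj_def)
  then have "(adj (V, (E - {e}) - {{q,p}}))\<^sup>*\<^sup>* q p" using t1 by simp
  then show False using lemmaB[OF g2 fE] ac by blast
qed

lemma U1:
  assumes g: "graph (V,E)" and ac: "\<not>(\<exists>vs. is_cycle_list (V, E - {e}) vs)"
    and c1: "is_cycle_list (V,E) vs1" and c2: "is_cycle_list (V,E) vs2"
  shows "cycle_edges vs1 = cycle_edges vs2"
  using U1_aux[OF g ac c1 c2] U1_aux[OF g ac c2 c1] by blast


lemma adj_sym: "adj G x y \<Longrightarrow> adj G y x" by (simp add: adj_def insert_commute)

lemma comp_reach:
  assumes g: "graph G" and r: "(adj G)\<^sup>*\<^sup>* v u" and v: "v \<in> fst G"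
  shows "(adj (component G v))\<^sup>*\<^sup>* v u \<and> u \<in> fst G"
  using r
proof (induction rule: rtranclp_induct)
  case base then show ?case using v by simp
next
  case (step z u)
  have zu: "z \<in> fst G" "u \<in> fst G" using graph_edge[OF g] step(2) by (auto simp: adj_def)
  have "(adj G)\<^sup>*\<^sup>* v u" using step(1,2) by (rule rtranclp.rtrancl_into_rtrancl)
  then have azu: "adj (component G v) z u" using step zu
    by (auto simp: adj_def component_def induced_def)
  show ?case using rtranclp.rtrancl_into_rtrancl[OF conjunct1[OF step(3)] azu] zu(2) by simp
qed

lemma comp_conn: assumes g: "graph G" and v: "v \<in> fst G"
  shows "connected_graph (component G v)"
proof -
  have gr: "graph (component G v)" unfolding graph_def
  proof
    have "fst (component G v) \<subseteq> fst G" by (auto simp: component_def induced_def)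
    then show "finite (fst (component G v))" using g finite_subset by (auto simp: graph_def)
    show "\<forall>e\<in>snd (component G v). \<exists>x y. x \<noteq> y \<and> e = {x, y} \<and> x \<in> fst (component G v) \<and> y \<in> fst (component G v)"
    proof
      fix e assume e: "e \<in> snd (component G v)"
      then have e1: "e \<in> snd G" "e \<subseteq> fst (component G v)" by (auto simp: component_def induced_def)
      then obtain x y where "x \<noteq> y" "e = {x,y}" using g by (auto simp: graph_def)
      then show "\<exists>x y. x \<noteq> y \<and> e = {x, y} \<and> x \<in> fst (component G v) \<and> y \<in> fst (component G v)"
        using e1(2) by blast
    qed
  qed
  have ne: "fst (component G v) \<noteq> {}" using v by (auto simp: component_def induced_def)
  have "\<forall>u\<in>fst (component G v). \<forall>w\<in>fst (component G v). (adj (component G v))\<^sup>*\<^sup>* u w"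
  proof (intro ballI)
    fix u w assume "u \<in> fst (component G v)" "w \<in> fst (component G v)"
    then have "(adj G)\<^sup>*\<^sup>* v u" "(adj G)\<^sup>*\<^sup>* v w" by (auto simp: component_def induced_def)
    then have "(adj (component G v))\<^sup>*\<^sup>* v u" "(adj (component G v))\<^sup>*\<^sup>* v w"
      using comp_reach[OF g _ v] by auto
    then have "(adj (component G v))\<^sup>*\<^sup>* u v" "(adj (component G v))\<^sup>*\<^sup>* v w"
      using sym_rtc[of "adj (component G v)", OF adj_sym] by blast+
    then show "(adj (component G v))\<^sup>*\<^sup>* u w" by (rule rtranclp_trans)
  qed
  then show ?thesis using gr ne by (simp add: connected_graph_def)
qed

lemma comp_cycle: "is_cycle_list (component G v) vs \<Longrightarrow>
   is_cycle_list G vs \<and> set vs \<subseteq> {u\<in>fst G. (adj G)\<^sup>*\<^sup>* v u}"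
proof -
  assume c: "is_cycle_list (component G v) vs"
  have "is_cycle_list G vs" by (rule cycle_mono[OF c]) (auto simp: component_def induced_def)
  moreover have "set vs \<subseteq> {u\<in>fst G. (adj G)\<^sup>*\<^sup>* v u}" using c
    by (auto simp: is_cycle_list_def component_def induced_def)
  ultimately show ?thesis by blast
qed

lemma pf_from:
  assumes g: "graph G"
    and u: "\<And>v vs1 vs2. v \<in> fst G \<Longrightarrow> is_cycle_list (component G v) vs1 \<Longrightarrow>
           is_cycle_list (component G v) vs2 \<Longrightarrow> cycle_edges vs1 = cycle_edges vs2"
  shows "pseudoforest G"
  unfolding pseudoforest_def
proof (intro conjI g ballI)
  fix v assume v: "v \<in> fst G"
  have cg: "connected_graph (component G v)" using comp_conn[OF g v] .
  show "is_tree (component G v) \<or> unicyclic (component G v)"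
  proof (cases "cycles (component G v) = {}")
    case True then show ?thesis using cg by (simp add: is_tree_def)
  next
    case False
    then obtain C where C: "C \<in> cycles (component G v)" by blast
    have "\<forall>C'\<in>cycles (component G v). C' = C"
      using C u[OF v] by (auto simp: cycles_def)
    then have "\<exists>!C. C \<in> cycles (component G v)" using C by blast
    then show ?thesis using cg by (simp add: unicyclic_def)
  qed
qed

lemma vert_cycle: "is_cycle_list G vs \<Longrightarrow> x \<in> set vs \<Longrightarrow> \<exists>e\<in>cycle_edges vs. x \<in> e"
proof -
  assume c: "is_cycle_list G vs" and x: "x \<in> set vs"
  then obtain i where i: "i < length vs" "vs!i = x" by (auto simp: in_set_conv_nth)
  have "x \<in> {vs!i, vs!((i+1) mod length vs)}" using i by simp
  then show ?thesis using edge_in[OF i(1)] by (rule rev_bexI[rotated])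
qed


lemma main:
  assumes uc: "unicyclic (V,E)" and abC: "{a,b} \<in> snd (Cycles (V,E))"
    and ic: "interchangeable (V,E) a b c d"
  shows "pseudoforest (V, (E - {{a,b},{c,d}}) \<union> {{a,c},{b,d}})"
proof -
  have g: "graph (V,E)" using uc by (simp add: unicyclic_def connected_graph_def)
  obtain C0 where C0: "C0 \<in> cycles (V,E)" "\<And>C. C \<in> cycles (V,E) \<Longrightarrow> C = C0"
    using uc unfolding unicyclic_def by blast
  obtain vs0 where vs0: "is_cycle_list (V,E) vs0" "C0 = cycle_edges vs0"
    using C0(1) by (auto simp: cycles_def)
  have uniq: "\<And>vs. is_cycle_list (V,E) vs \<Longrightarrow> cycle_edges vs = cycle_edges vs0"
    using C0(2) vs0(2) by (auto simp: cycles_def)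
  have ab: "{a,b} \<in> E" "{c,d} \<in> E" "{a,b} \<inter> {c,d} = {}" "{a,c} \<notin> E" "{b,d} \<notin> E"
    using ic by (auto simp: interchangeable_def)
  have abne: "{a,b} \<noteq> {c,d}" using ab(3) by auto
  have onc: "\<And>x. x \<in> {a,b} \<Longrightarrow> x \<in> set vs0"
  proof -
    fix x assume "x \<in> {a,b}"
    then obtain vs where vs: "is_cycle_list (V,E) vs" "x \<in> set vs"
      using abC by (auto simp: Cycles_def induced_def)
    then obtain e where e: "e \<in> cycle_edges vs" "x \<in> e" using vert_cycle[OF vs(1) vs(2)] by blast
    have "e \<in> cycle_edges vs0" using e uniq[OF vs(1)] by simp
    then obtain p q where "e = {p,q}" "{p,q} \<in> cycle_edges vs0" by (auto simp: cycle_edges_def)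
    then show "x \<in> set vs0" using cycle_vert[of p q vs0] e(2) by auto
  qed
  have abin: "{a,b} \<in> cycle_edges vs0"
  proof (rule ccontr)
    assume nab: "{a,b} \<notin> cycle_edges vs0"
    let ?R = "adj (V, E - {{a,b}})"
    have r0: "\<And>k. k < length vs0 \<Longrightarrow> ?R\<^sup>*\<^sup>* (vs0!0) (vs0!k)"
    proof -
      fix k assume k: "k < length vs0"
      show "?R\<^sup>*\<^sup>* (vs0!0) (vs0!k)"
      proof (rule lift_rtc[OF W0[OF vs0(1) k]])
        fix u w assume "{u,w} \<in> cycle_edges vs0"
        then show "?R\<^sup>*\<^sup>* u w" using nab cycle_edges_sub[OF vs0(1)]
          by (intro r_into_rtranclp) (auto simp: adj_def)
      qed
    qed
    have "a \<in> set vs0" "b \<in> set vs0" using onc by auto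
    then obtain ka kb where k: "ka < length vs0" "vs0!ka = a" "kb < length vs0" "vs0!kb = b"
      by (auto simp: in_set_conv_nth)
    have "?R\<^sup>*\<^sup>* a (vs0!0)" using sym_rtc[OF adj_sym r0[OF k(1)]] k(2) by simp
    then have "?R\<^sup>*\<^sup>* a b" using rtranclp_trans[OF _ r0[OF k(3)]] k(4) by simp
    then obtain vs where "is_cycle_list (V,E) vs" "{a,b} \<in> cycle_edges vs"
      using lemmaB[OF g ab(1)] by blast
    then show False using uniq nab by blast
  qed
  have acyc: "\<And>E2 vs. E2 \<subseteq> E - {{a,b}} \<Longrightarrow> \<not> is_cycle_list (V,E2) vs"
  proof
    fix E2 vs assume E2: "E2 \<subseteq> E - {{a,b}}" and c: "is_cycle_list (V,E2) vs"
    have "is_cycle_list (V,E) vs" using cycle_mono[OF c, of "(V,E)"] E2 by auto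
    then have "{a,b} \<in> cycle_edges vs" using uniq abin by simp
    then show False using cycle_edges_sub[OF c] E2 by auto
  qed
  define E' where "E' = (E - {{a,b},{c,d}}) \<union> {{a,c},{b,d}}"
  have abcd: "a \<in> V" "b \<in> V" "c \<in> V" "d \<in> V" "a \<noteq> c" "b \<noteq> d"
    using graph_edge[OF g, of a b] graph_edge[OF g, of c d] ab by auto
  have g': "graph (V,E')"
    unfolding graph_def
  proof (intro conjI ballI)
    show "finite (fst (V,E'))" using g by (simp add: graph_def)
    fix e assume "e \<in> snd (V,E')"
    then have "e \<in> E \<or> e = {a,c} \<or> e = {b,d}" by (auto simp: E'_def)
    then show "\<exists>x y. x \<noteq> y \<and> e = {x, y} \<and> x \<in> fst (V,E') \<and> y \<in> fst (V,E')"
      using g abcd unfolding graph_def by auto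
  qed
  let ?F = "\<lambda>u w. {u,w} \<in> (E - {{a,b}}) - {{c,d}}"
  have sub1: "(E' - {{a,c}}) - {{b,d}} \<subseteq> E - {{a,b}}" "(E' - {{b,d}}) - {{a,c}} \<subseteq> E - {{a,b}}"
    by (auto simp: E'_def)
  show ?thesis unfolding E'_def[symmetric]
  proof (rule pf_from[OF g'])
    fix v vs1 vs2
    assume v: "v \<in> fst (V,E')" and k1: "is_cycle_list (component (V,E') v) vs1"
      and k2: "is_cycle_list (component (V,E') v) vs2"
    have c1: "is_cycle_list (V,E') vs1" "set vs1 \<subseteq> {u\<in>V. (adj (V,E'))\<^sup>*\<^sup>* v u}"
      using comp_cycle[OF k1] by auto
    have c2: "is_cycle_list (V,E') vs2" "set vs2 \<subseteq> {u\<in>V. (adj (V,E'))\<^sup>*\<^sup>* v u}"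
      using comp_cycle[OF k2] by auto
    have gac: "graph (V, E' - {{a,c}})" "graph (V, E' - {{b,d}})" using graph_sub[OF g'] by auto
    show "cycle_edges vs1 = cycle_edges vs2"
    proof (cases "\<exists>vs. is_cycle_list (V, E' - {{a,c}}) vs")
      case False then show ?thesis using U1[OF g' False c1(1) c2(1)] by simp
    next
      case True
      then obtain wa where wa: "is_cycle_list (V, E' - {{a,c}}) wa" by blast
      show ?thesis
      proof (cases "\<exists>vs. is_cycle_list (V, E' - {{b,d}}) vs")
        case False then show ?thesis using U1[OF g' False c1(1) c2(1)] by simp
      next
        case True
        then obtain wb where wb: "is_cycle_list (V, E' - {{b,d}}) wb" by blast
        have bdwa: "{b,d} \<in> cycle_edges wa"
        proof (rule ccontr)
          assume "{b,d} \<notin> cycle_edges wa"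
          then have "cycle_edges wa \<subseteq> (E' - {{a,c}}) - {{b,d}}" using cycle_edges_sub[OF wa] by auto
          then show False using cycle_restrict[OF wa] acyc[OF sub1(1)] by blast
        qed
        have acwb: "{a,c} \<in> cycle_edges wb"
        proof (rule ccontr)
          assume "{a,c} \<notin> cycle_edges wb"
          then have "cycle_edges wb \<subseteq> (E' - {{b,d}}) - {{a,c}}" using cycle_edges_sub[OF wb] by auto
          then show False using cycle_restrict[OF wb] acyc[OF sub1(2)] by blast
        qed
        have bdF: "?F\<^sup>*\<^sup>* b d"
        proof (rule lift_rtc[OF W'[OF wa bdwa]])
          fix u w assume "{u,w} \<in> cycle_edges wa - {{b,d}}"
          then show "?F\<^sup>*\<^sup>* u w" using cycle_edges_sub[OF wa]
            by (intro r_into_rtranclp) (auto simp: E'_def)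
        qed
        have acF: "?F\<^sup>*\<^sup>* a c"
        proof (rule lift_rtc[OF W'[OF wb acwb]])
          fix u w assume "{u,w} \<in> cycle_edges wb - {{a,c}}"
          then show "?F\<^sup>*\<^sup>* u w" using cycle_edges_sub[OF wb]
            by (intro r_into_rtranclp) (auto simp: E'_def)
        qed
        have Fsym: "\<And>u w. ?F u w \<Longrightarrow> ?F w u" by (simp add: insert_commute)
        have nab: "\<not> ?F\<^sup>*\<^sup>* a b"
        proof
          assume ab': "?F\<^sup>*\<^sup>* a b"
          have "?F\<^sup>*\<^sup>* c d" by (rule rtranclp_trans[OF rtranclp_trans[OF sym_rtc[OF Fsym acF] ab'] bdF])
          moreover have "adj (V, (E - {{a,b}}) - {{c,d}}) = ?F" by (intro ext) (simp add: adj_def)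
          ultimately have r: "(adj (V, (E - {{a,b}}) - {{c,d}}))\<^sup>*\<^sup>* c d" by simp
          have gg: "graph (V, E - {{a,b}})" using graph_sub[OF g] by blast
          have cdE: "{c,d} \<in> E - {{a,b}}" using ab(2) abne by simp
          obtain vs where "is_cycle_list (V, E - {{a,b}}) vs" using lemmaB[OF gg cdE r] by blast
          then show False using acyc by blast
        qed
        have toF: "\<And>x y. (adj (V,E'))\<^sup>*\<^sup>* x y \<Longrightarrow> ?F\<^sup>*\<^sup>* x y"
        proof -
          fix x y assume "(adj (V,E'))\<^sup>*\<^sup>* x y"
          then show "?F\<^sup>*\<^sup>* x y"
          proof (rule lift_rtc)
            fix u w assume "adj (V,E') u w"
            then have "{u,w} \<in> E - {{a,b},{c,d}} \<or> {u,w} = {a,c} \<or> {u,w} = {b,d}"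
              by (auto simp: adj_def E'_def)
            moreover have "{u,w} = {a,c} \<Longrightarrow> ?F\<^sup>*\<^sup>* u w"
              using acF sym_rtc[OF Fsym acF] by (auto simp: doubleton_eq_iff)
            moreover have "{u,w} = {b,d} \<Longrightarrow> ?F\<^sup>*\<^sup>* u w"
              using bdF sym_rtc[OF Fsym bdF] by (auto simp: doubleton_eq_iff)
            moreover have "{u,w} \<in> E - {{a,b},{c,d}} \<Longrightarrow> ?F\<^sup>*\<^sup>* u w"
              by (intro r_into_rtranclp) auto
            ultimately show "?F\<^sup>*\<^sup>* u w" by blast
          qed
        qed
        show ?thesis
        proof (cases "{b,d} \<notin> cycle_edges vs1 \<and> {b,d} \<notin> cycle_edges vs2")
          case True
          have "cycle_edges vs1 \<subseteq> E' - {{b,d}}" "cycle_edges vs2 \<subseteq> E' - {{b,d}}"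
            using True cycle_edges_sub[OF c1(1)] cycle_edges_sub[OF c2(1)] by auto
          then have "is_cycle_list (V, E' - {{b,d}}) vs1" "is_cycle_list (V, E' - {{b,d}}) vs2"
            using cycle_restrict[OF c1(1)] cycle_restrict[OF c2(1)] by simp_all
          moreover have "\<not> (\<exists>vs. is_cycle_list (V, (E' - {{b,d}}) - {{a,c}}) vs)"
            using acyc[OF sub1(2)] by blast
          ultimately show ?thesis using U1[OF gac(2)] by blast
        next
          case nbd: False
          show ?thesis
          proof (cases "{a,c} \<notin> cycle_edges vs1 \<and> {a,c} \<notin> cycle_edges vs2")
            case True
            have "cycle_edges vs1 \<subseteq> E' - {{a,c}}" "cycle_edges vs2 \<subseteq> E' - {{a,c}}"
              using True cycle_edges_sub[OF c1(1)] cycle_edges_sub[OF c2(1)] by auto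
            then have "is_cycle_list (V, E' - {{a,c}}) vs1" "is_cycle_list (V, E' - {{a,c}}) vs2"
              using cycle_restrict[OF c1(1)] cycle_restrict[OF c2(1)] by simp_all
            moreover have "\<not> (\<exists>vs. is_cycle_list (V, (E' - {{a,c}}) - {{b,d}}) vs)"
              using acyc[OF sub1(1)] by blast
            ultimately show ?thesis using U1[OF gac(1)] by blast
          next
            case False
            have "b \<in> set vs1 \<or> b \<in> set vs2" using nbd cycle_vert[of b d vs1] cycle_vert[of b d vs2] by auto
            then have bS: "(adj (V,E'))\<^sup>*\<^sup>* v b" using c1(2) c2(2) by auto
            have "a \<in> set vs1 \<or> a \<in> set vs2" using False cycle_vert[of a c vs1] cycle_vert[of a c vs2] by auto
            then have aS: "(adj (V,E'))\<^sup>*\<^sup>* v a" using c1(2) c2(2) by auto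
            have "(adj (V,E'))\<^sup>*\<^sup>* a b" by (rule rtranclp_trans[OF sym_rtc[OF adj_sym aS] bS])
            then show ?thesis using toF[of a b] nab by simp
          qed
        qed
      qed
    qed
  qed
qed


theorem lemma4p4:
  fixes U :: "'a graph" and a b c d :: 'a
  assumes "unicyclic U"
    and "{a, b} \<in> snd (Cycles U)" and "{c, d} \<in> snd (Cycles U)"
    and "two_switch U a b c d \<noteq> U"
  shows "p_switch U a b c d"
proof -
  obtain V E where U: "U = (V,E)" by (cases U) simp
  have ic: "interchangeable U a b c d" using assms(4) unfolding two_switch_def
    by (cases "interchangeable U a b c d") simp_all
  have ts: "two_switch U a b c d = (V, (E - {{a,b},{c,d}}) \<union> {{a,c},{b,d}})"
    using ic U by (simp add: two_switch_def)
  have uc1: "connected_graph U" using assms(1)[unfolded unicyclic_def] by (rule conjunct1)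
  have uc2: "\<exists>!C. C \<in> cycles U" using assms(1)[unfolded unicyclic_def] by (rule conjunct2)
  have g: "graph U" using uc1[unfolded connected_graph_def] by (rule conjunct1)
  obtain C0 where C0': "\<forall>C. C \<in> cycles U \<longrightarrow> C = C0"
    using uc2 by (rule ex1E) blast
  have C0: "\<And>C. C \<in> cycles U \<Longrightarrow> C = C0" using C0' by blast
  have pfU: "pseudoforest U"
  proof (rule pf_from[OF g])
    fix v vs1 vs2
    assume h1: "is_cycle_list (component U v) vs1" and h2: "is_cycle_list (component U v) vs2"
    have i1: "is_cycle_list U vs1" by (rule conjunct1[OF comp_cycle[OF h1]])
    have i2: "is_cycle_list U vs2" by (rule conjunct1[OF comp_cycle[OF h2]])
    have m1: "cycle_edges vs1 \<in> cycles U" unfolding cycles_def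
      by (rule CollectI, rule exI[of _ vs1], rule conjI[OF refl i1])
    have m2: "cycle_edges vs2 \<in> cycles U" unfolding cycles_def
      by (rule CollectI, rule exI[of _ vs2], rule conjI[OF refl i2])
    show "cycle_edges vs1 = cycle_edges vs2" using C0[OF m1] C0[OF m2] by (rule trans[OF _ sym])
  qed
  have "pseudoforest (V, (E - {{a,b},{c,d}}) \<union> {{a,c},{b,d}})"
  proof (rule main)
    show "unicyclic (V,E)" using assms(1) U by simp
    show "{a,b} \<in> snd (Cycles (V,E))" using assms(2) U by simp
    show "interchangeable (V,E) a b c d" using ic U by simp
  qed
  then have "pseudoforest (two_switch U a b c d)" using ts by simp
  then show ?thesis using pfU assms(4) unfolding p_switch_def by blast
qed

end
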